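(* Let $H=(V,E)$ be a hypergraph whose vertex set $V$ is a partition of $[n]$ into sets of cardinality at least $2$, and suppose $H$ is downward-closed (for every $e\in E$ and every $e'\subseteq e$ with $|e'|>1$, $e'\in E$). Let $D=\{\bar i_I\}_{I\in V}$ with $\bar i_I\in I$ for each $I\in V$. Then \[\operatorname{aff}\mathrm{MC}^H=\Big\{w\in\mathbb{R}^{\mathcal{J}^H}\ \Big|\ w_J=\mathscr{L}\prod_{\bar i_I\in J\cap D}\Big(1-\sum_{i\in I\setminus\{\bar i_I\}}w_i\Big)\prod_{i\in J\setminus D}w_i\ \ \forall J\in\mathcal{J}^H\setminus\mathcal{J}^H_\le(D)\Big\}.\]
   Context: Let $n$ be a positive integer, $[n]=\{1,\dots,n\}$. A hypergraph $H=(V,E)$ here has as vertex set $V$ a family of pairwise disjoint subsets of $[n]$, each of cardinality at least $2$, and hyperedge set $E$ consisting of subsets $e\subseteq V$ with $|e|\ge 2$. Write $L(V)=\{\{I\}: I\in V\}$. For a nonempty $e\subseteq V$, $\mathcal{J}^e$ denotes the family of sets $J\subseteq \bigcup_{I\in e} I$ with $|J\cap I|=1$ for every $I\in e$. Let $\mathcal{J}^H=\bigcup_{e\in L(V)\cup E}\mathcal{J}^e$. For a vector $w$ indexed by sets, write $w_i=w_{\{i\}}$. Let $\mathscr{S}^H=\{w\in\{0,1\}^{\mathcal{J}^H}: \sum_{i\in I}w_i=1\ \forall I\in V;\ w_J=\prod_{i\in J}w_i\ \forall J\in\mathcal{J}^H, |J|>1\}$, $\mathrm{MC}^H=\operatorname{conv}\mathscr{S}^H$,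 and $\operatorname{aff}$ denotes affine hull. $\mathcal{J}^H_\le(D)=\{J\in\mathcal{J}^H: J\subseteq[n]\setminus D\}$. The linearization operator $\mathscr{L}$ expands the polynomial and replaces each monomial $\prod_{i\in J'}w_i$ ($J'\ne\varnothing$) by the coordinate $w_{J'}$, the empty monomial being the constant $1$; under the hypotheses every such $J'$ lies in $\mathcal{J}^H_\le(D)$, so the right-hand side is an affine function of $w$. *)

theory Defs
  imports "HOL-Analysis.Analysis" "HOL-Library.Poly_Mapping"
begin

text \<open>Vectors in R^(J^H) are represented as functions from index sets (nat set) to real,
  required to vanish outside J^H.  Affine and convex hulls in this function space,
  written out as the library definitions of affine and convex unfold to.\<close>

definition affine_fun :: "('a \<Rightarrow> real) set \<Rightarrow> bool" where
  "affine_fun S \<longleftrightarrow> (\<forall>x\<in>S. \<forall>y\<in>S. \<forall>u v. u + v = 1 \<longrightarrow> (\<lambda>J. u * x J + v * y J) \<in> S)"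

definition convex_fun :: "('a \<Rightarrow> real) set \<Rightarrow> bool" where
  "convex_fun S \<longleftrightarrow> (\<forall>x\<in>S. \<forall>y\<in>S. \<forall>u v. 0 \<le> u \<longrightarrow> 0 \<le> v \<longrightarrow> u + v = 1 \<longrightarrow>
      (\<lambda>J. u * x J + v * y J) \<in> S)"

definition Jsets :: "nat set set \<Rightarrow> nat set set" where
  "Jsets e = {J. J \<subseteq> \<Union>e \<and> (\<forall>I\<in>e. card (J \<inter> I) = 1)}"

definition LV :: "nat set set \<Rightarrow> nat set set set" where
  "LV V = {{I} | I. I \<in> V}"

definition JH :: "nat set set \<Rightarrow> nat set set set \<Rightarrow> nat set set" where
  "JH V E = (\<Union>e\<in>LV V \<union> E. Jsets e)"

definition JH_le :: "nat \<Rightarrow> nat set set \<Rightarrow> nat set set set \<Rightarrow> nat set \<Rightarrow> nat set set" where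
  "JH_le n V E D = {J \<in> JH V E. J \<subseteq> {1..n} - D}"

definition SH :: "nat set set \<Rightarrow> nat set set set \<Rightarrow> (nat set \<Rightarrow> real) set" where
  "SH V E = {w. (\<forall>J. J \<notin> JH V E \<longrightarrow> w J = 0) \<and>
      (\<forall>J\<in>JH V E. w J \<in> {0, 1}) \<and>
      (\<forall>I\<in>V. (\<Sum>i\<in>I. w {i}) = 1) \<and>
      (\<forall>J\<in>JH V E. card J > 1 \<longrightarrow> w J = (\<Prod>i\<in>J. w {i}))}"

definition MC :: "nat set set \<Rightarrow> nat set set set \<Rightarrow> (nat set \<Rightarrow> real) set" where
  "MC V E = convex_fun hull SH V E"

type_synonym rpoly = "(nat \<Rightarrow>\<^sub>0 nat) \<Rightarrow>\<^sub>0 real"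

definition Var :: "nat \<Rightarrow> rpoly" where
  "Var i = Poly_Mapping.single (Poly_Mapping.single i 1) 1"

definition linearize :: "(nat set \<Rightarrow> real) \<Rightarrow> rpoly \<Rightarrow> real" where
  "linearize w p = (\<Sum>m\<in>Poly_Mapping.keys p. Poly_Mapping.lookup p m * (if m = 0 then 1 else w (Poly_Mapping.keys m)))"

definition downward_closed :: "nat set set set \<Rightarrow> bool" where
  "downward_closed E \<longleftrightarrow> (\<forall>e\<in>E. \<forall>e'. e' \<subseteq> e \<and> card e' > 1 \<longrightarrow> e' \<in> E)"

end

theory Submission
  imports Defs
begin


definition ind :: "bool \<Rightarrow> real" where "ind Q = (if Q then 1 else 0)"

lemma prod_ind: "finite A \<Longrightarrow> (\<Prod>a\<in>A. ind (Q a)) = ind (\<forall>a\<in>A. Q a)"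
  by (induction A rule: finite_induct) (auto simp: ind_def)

lemma affine_fun_Inter: "(\<And>S. S \<in> F \<Longrightarrow> affine_fun S) \<Longrightarrow> affine_fun (\<Inter>F)"
  unfolding affine_fun_def by blast

lemma affine_fun_hull: "affine_fun (affine_fun hull S)"
  by (rule hull_in) (simp add: affine_fun_Inter)

lemma affine_convex_fun: "affine_fun S \<Longrightarrow> convex_fun S"
  unfolding affine_fun_def convex_fun_def by blast

lemma affine_funD: "affine_fun S \<Longrightarrow> x \<in> S \<Longrightarrow> y \<in> S \<Longrightarrow> u + v = 1 \<Longrightarrow> (\<lambda>J. u * x J + v * y J) \<in> S"
  unfolding affine_fun_def by blast

lemma affine_fun_3:
  assumes S: "affine_fun S" and a: "a \<in> S" and b: "b \<in> S" and cc: "d \<in> S"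
  shows "(\<lambda>J. a J + t * b J - t * d J) \<in> S"
proof (cases "t = 1")
  case True
  have m: "(\<lambda>J. (1/2) * a J + (1/2) * b J) \<in> S" using affine_funD[OF S a b, of "1/2" "1/2"] by simp
  have "(\<lambda>J. 2 * ((1/2) * a J + (1/2) * b J) + (-1) * d J) \<in> S"
    using affine_funD[OF S m cc, of 2 "-1"] by simp
  moreover have "(\<lambda>J. 2 * ((1/2) * a J + (1/2) * b J) + (-1) * d J) = (\<lambda>J. a J + t * b J - t * d J)"
    using True by (auto simp: algebra_simps)
  ultimately show ?thesis by simp
next
  case False
  have m: "(\<lambda>J. (1/(1-t)) * a J + (-t/(1-t)) * d J) \<in> S"
    using affine_funD[OF S a cc, of "1/(1-t)" "-t/(1-t)"] False by (simp add: field_simps)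
  have "(\<lambda>J. (1-t) * ((1/(1-t)) * a J + (-t/(1-t)) * d J) + t * b J) \<in> S"
    using affine_funD[OF S m b, of "1-t" t] by simp
  moreover have "(\<lambda>J. (1-t) * ((1/(1-t)) * a J + (-t/(1-t)) * d J) + t * b J) = (\<lambda>J. a J + t * b J - t * d J)"
  proof (rule ext)
    fix J have h: "1 - t \<noteq> 0" using False by simp
    show "(1-t) * ((1/(1-t)) * a J + (-t/(1-t)) * d J) + t * b J = a J + t * b J - t * d J"
      using h by (simp add: right_diff_distrib)
  qed
  ultimately show ?thesis by simp
qed


definition gm :: "(nat set \<Rightarrow> real) \<Rightarrow> (nat \<Rightarrow>\<^sub>0 nat) \<Rightarrow> real" where
  "gm w m = (if m = 0 then 1 else w (Poly_Mapping.keys m))"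

lemma lin_superset:
  assumes "finite S" "Poly_Mapping.keys p \<subseteq> S"
  shows "linearize w p = (\<Sum>m\<in>S. Poly_Mapping.lookup p m * gm w m)"
  unfolding linearize_def gm_def
  by (rule sum.mono_neutral_left) (use assms in \<open>auto simp: in_keys_iff\<close>)

lemma lin_add: "linearize w (p + q) = linearize w p + linearize w q"
proof -
  let ?S = "Poly_Mapping.keys p \<union> Poly_Mapping.keys q"
  have f: "finite ?S" by simp
  have "linearize w (p + q) = (\<Sum>m\<in>?S. Poly_Mapping.lookup (p + q) m * gm w m)"
    by (rule lin_superset[OF f]) (rule keys_add)
  also have "\<dots> = (\<Sum>m\<in>?S. Poly_Mapping.lookup p m * gm w m) + (\<Sum>m\<in>?S. Poly_Mapping.lookup q m * gm w m)"
    by (simp add: lookup_add distrib_right sum.distrib)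
  also have "\<dots> = linearize w p + linearize w q"
    using lin_superset[OF f, of p w] lin_superset[OF f, of q w] by auto
  finally show ?thesis .
qed

lemma lin_zero: "linearize w 0 = 0"
  by (simp add: linearize_def)

lemma lin_sum: "linearize w (sum f A) = (\<Sum>a\<in>A. linearize w (f a))"
  by (induction A rule: infinite_finite_induct) (auto simp: lin_zero lin_add)

lemma lin_single: "linearize w (Poly_Mapping.single m a) = a * gm w m"
  by (simp add: linearize_def gm_def)

lemma prod_single:
  fixes f :: "'x \<Rightarrow> (nat \<Rightarrow>\<^sub>0 nat)" and a :: "'x \<Rightarrow> real"
  shows "(\<Prod>x\<in>A. Poly_Mapping.single (f x) (a x)) = Poly_Mapping.single (\<Sum>x\<in>A. f x) (\<Prod>x\<in>A. a x)"
  by (induction A rule: infinite_finite_induct) (auto simp: mult_single)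

lemma keys_add_nat: "Poly_Mapping.keys (p + (q :: 'b \<Rightarrow>\<^sub>0 nat)) = Poly_Mapping.keys p \<union> Poly_Mapping.keys q"
  by (auto simp: in_keys_iff lookup_add)

lemma keys_sum_nat:
  fixes f :: "'x \<Rightarrow> ('b \<Rightarrow>\<^sub>0 nat)"
  shows "finite A \<Longrightarrow> Poly_Mapping.keys (\<Sum>x\<in>A. f x) = (\<Union>x\<in>A. Poly_Mapping.keys (f x))"
  by (induction A rule: finite_induct) (auto simp: keys_add_nat)

definition opts :: "(nat set \<Rightarrow> nat) \<Rightarrow> nat set \<Rightarrow> nat option set" where
  "opts c I = insert None (Some ` (I - {c I}))"

definition ex :: "nat option \<Rightarrow> (nat \<Rightarrow>\<^sub>0 nat)" where
  "ex ot = (case ot of None \<Rightarrow> 0 | Some i \<Rightarrow> Poly_Mapping.single i 1)"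

definition sg :: "nat option \<Rightarrow> real" where
  "sg ot = (case ot of None \<Rightarrow> 1 | Some i \<Rightarrow> -1)"

definition wt :: "(nat set \<Rightarrow> real) \<Rightarrow> nat set \<Rightarrow> real" where
  "wt w K = (if K = {} then 1 else w K)"

lemma keys_ex: "Poly_Mapping.keys (ex ot) = set_option ot"
  by (cases ot) (auto simp: ex_def)

lemma finite_opts: "finite I \<Longrightarrow> finite (opts c I)"
  by (simp add: opts_def)

lemma factor_expand:
  assumes "finite I"
  shows "(1 - (\<Sum>i\<in>I - {c I}. Var i)) = (\<Sum>ot\<in>opts c I. Poly_Mapping.single (ex ot) (sg ot))"
proof -
  have "(\<Sum>ot\<in>opts c I. Poly_Mapping.single (ex ot) (sg ot)) =
     Poly_Mapping.single (ex None) (sg None) + (\<Sum>ot\<in>Some ` (I - {c I}). Poly_Mapping.single (ex ot) (sg ot))"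
    unfolding opts_def using assms by (subst sum.insert) auto
  also have "(\<Sum>ot\<in>Some ` (I - {c I}). Poly_Mapping.single (ex ot) (sg ot)) = (\<Sum>i\<in>I - {c I}. Poly_Mapping.single (ex (Some i)) (sg (Some i)))"
    by (subst sum.reindex) auto
  also have "\<dots> = (\<Sum>i\<in>I - {c I}. - Var i)"
    by (simp add: ex_def sg_def Var_def single_uminus)
  finally show ?thesis by (simp add: ex_def sg_def sum_negf)
qed

definition Kphi :: "(nat set \<Rightarrow> nat) \<Rightarrow> nat set set \<Rightarrow> nat set \<Rightarrow> (nat set \<Rightarrow> nat option) \<Rightarrow> nat set" where
  "Kphi c V J \<phi> = (\<Union>I\<in>{I\<in>V. c I \<in> J}. set_option (\<phi> I)) \<union> (J - c ` V)"

lemma lin_pJ: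
  assumes fV: "finite V" and fI: "\<forall>I\<in>V. finite I" and fJ: "finite J"
  shows "linearize w ((\<Prod>I\<in>{I\<in>V. c I \<in> J}. 1 - (\<Sum>i\<in>I - {c I}. Var i)) * (\<Prod>i\<in>J - c ` V. Var i))
    = (\<Sum>\<phi>\<in>PiE {I\<in>V. c I \<in> J} (opts c). (\<Prod>I\<in>{I\<in>V. c I \<in> J}. sg (\<phi> I)) * wt w (Kphi c V J \<phi>))"
proof -
  let ?B = "{I\<in>V. c I \<in> J}"
  let ?R = "J - c ` V"
  have fB: "finite ?B" using fV by simp
  have fR: "finite ?R" using fJ by simp
  have "(\<Prod>I\<in>?B. 1 - (\<Sum>i\<in>I - {c I}. Var i)) = (\<Prod>I\<in>?B. \<Sum>ot\<in>opts c I. Poly_Mapping.single (ex ot) (sg ot))"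
    using fI by (intro prod.cong refl factor_expand) auto
  also have "\<dots> = (\<Sum>\<phi>\<in>PiE ?B (opts c). \<Prod>I\<in>?B. Poly_Mapping.single (ex (\<phi> I)) (sg (\<phi> I)))"
    using fB fI by (intro prod_sum_PiE) (auto intro: finite_opts)
  also have "\<dots> = (\<Sum>\<phi>\<in>PiE ?B (opts c). Poly_Mapping.single (\<Sum>I\<in>?B. ex (\<phi> I)) (\<Prod>I\<in>?B. sg (\<phi> I)))"
    by (simp add: prod_single)
  finally have e1: "(\<Prod>I\<in>?B. 1 - (\<Sum>i\<in>I - {c I}. Var i)) = \<dots>" .
  have e2: "(\<Prod>i\<in>?R. Var i) = Poly_Mapping.single (\<Sum>i\<in>?R. Poly_Mapping.single i 1) 1"
    unfolding Var_def by (simp add: prod_single)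
  have "linearize w ((\<Prod>I\<in>?B. 1 - (\<Sum>i\<in>I - {c I}. Var i)) * (\<Prod>i\<in>?R. Var i)) =
     (\<Sum>\<phi>\<in>PiE ?B (opts c). (\<Prod>I\<in>?B. sg (\<phi> I)) * gm w ((\<Sum>I\<in>?B. ex (\<phi> I)) + (\<Sum>i\<in>?R. Poly_Mapping.single i 1)))"
    unfolding e1 e2 by (simp add: sum_distrib_right mult_single lin_sum lin_single)
  also have "\<dots> = (\<Sum>\<phi>\<in>PiE ?B (opts c). (\<Prod>I\<in>?B. sg (\<phi> I)) * wt w (Kphi c V J \<phi>))"
  proof (rule sum.cong[OF refl])
    fix \<phi>
    have k: "Poly_Mapping.keys ((\<Sum>I\<in>?B. ex (\<phi> I)) + (\<Sum>i\<in>?R. Poly_Mapping.single i 1)) = Kphi c V J \<phi>"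
      unfolding Kphi_def keys_add_nat using fB fR by (simp add: keys_sum_nat keys_ex)
    show "(\<Prod>I\<in>?B. sg (\<phi> I)) * gm w ((\<Sum>I\<in>?B. ex (\<phi> I)) + (\<Sum>i\<in>?R. Poly_Mapping.single i 1)) =
          (\<Prod>I\<in>?B. sg (\<phi> I)) * wt w (Kphi c V J \<phi>)"
      unfolding gm_def wt_def k[symmetric] by simp
  qed
  finally show ?thesis .
qed


locale hg =
  fixes n :: nat and V :: "nat set set" and E :: "nat set set set" and c :: "nat set \<Rightarrow> nat"
  assumes partition: "\<Union>V = {1..n}"
    and disj: "\<forall>I\<in>V. \<forall>I'\<in>V. I \<noteq> I' \<longrightarrow> I \<inter> I' = {}"
    and card_blocks: "\<forall>I\<in>V. finite I \<and> card I \<ge> 2"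
    and edges: "\<forall>e\<in>E. e \<subseteq> V \<and> finite e \<and> card e \<ge> 2"
    and down: "downward_closed E"
    and choice: "\<forall>I\<in>V. c I \<in> I"
begin

lemma finV: "finite V"
  using partition by (metis finite_UnionD finite_atLeastAtMost)

lemma finI: "I \<in> V \<Longrightarrow> finite I"
  using card_blocks by auto

lemma blk: "I \<in> V \<Longrightarrow> I' \<in> V \<Longrightarrow> x \<in> I \<Longrightarrow> x \<in> I' \<Longrightarrow> I = I'"
  using disj by blast

lemma cI: "I \<in> V \<Longrightarrow> c I \<in> I"
  using choice by auto

lemma JH_E:
  assumes "J \<in> JH V E"
  obtains e where "J \<in> Jsets e" "e \<in> LV V \<union> E" "e \<subseteq> V" "finite e" "e \<noteq> {}"
proof -
  obtain e where e: "e \<in> LV V \<union> E" "J \<in> Jsets e" using assms unfolding JH_def by blast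
  have "e \<subseteq> V \<and> finite e \<and> e \<noteq> {}"
  proof (cases "e \<in> LV V")
    case True then show ?thesis by (auto simp: LV_def)
  next
    case False then have "e \<in> E" using e by auto
    then show ?thesis using edges by fastforce
  qed
  then show ?thesis using that e by blast
qed

lemma Jsets_blocks:
  assumes "J \<in> Jsets e" "e \<subseteq> V"
  shows "e = {I\<in>V. J \<inter> I \<noteq> {}}"
proof
  show "e \<subseteq> {I\<in>V. J \<inter> I \<noteq> {}}"
  proof
    fix I assume "I \<in> e"
    then have "card (J \<inter> I) = 1" using assms unfolding Jsets_def by auto
    then show "I \<in> {I\<in>V. J \<inter> I \<noteq> {}}" using \<open>I \<in> e\<close> assms(2) by auto
  qed
next
  show "{I\<in>V. J \<inter> I \<noteq> {}} \<subseteq> e"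
  proof
    fix I assume I: "I \<in> {I\<in>V. J \<inter> I \<noteq> {}}"
    then obtain x where x: "x \<in> J" "x \<in> I" by auto
    then obtain I' where "I' \<in> e" "x \<in> I'" using assms unfolding Jsets_def by auto
    then show "I \<in> e" using blk[of I I' x] I x assms(2) by auto
  qed
qed

lemma JH_props:
  assumes "J \<in> JH V E"
  shows "finite J" "J \<noteq> {}" "J \<subseteq> {1..n}" "\<forall>I\<in>V. J \<inter> I = {} \<or> (\<exists>j. J \<inter> I = {j})"
proof -
  obtain e where e: "J \<in> Jsets e" "e \<in> LV V \<union> E" "e \<subseteq> V" "finite e" "e \<noteq> {}"
    using JH_E[OF assms] by blast
  have sub: "J \<subseteq> \<Union>e" and c1: "\<forall>I\<in>e. card (J \<inter> I) = 1" using e(1) unfolding Jsets_def by auto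
  show "finite J" using sub e(3,4) finI by (meson finite_Union finite_subset subsetD)
  obtain I where "I \<in> e" using e(5) by auto
  then show "J \<noteq> {}" using c1 by fastforce
  show "J \<subseteq> {1..n}" using sub e(3) partition by auto
  have eq: "e = {I\<in>V. J \<inter> I \<noteq> {}}" using Jsets_blocks e by auto
  show "\<forall>I\<in>V. J \<inter> I = {} \<or> (\<exists>j. J \<inter> I = {j})"
  proof
    fix I assume I: "I \<in> V"
    show "J \<inter> I = {} \<or> (\<exists>j. J \<inter> I = {j})"
    proof (cases "J \<inter> I = {}")
      case False then have "I \<in> e" using eq I by auto
      then have "card (J \<inter> I) = 1" using c1 by auto
      then show ?thesis by (auto simp: card_1_singleton_iff)
    qed simp
  qed
qed

lemma JH_intro:
  assumes J: "J \<in> JH V E" and Kne: "K \<noteq> {}" and Ksub: "K \<subseteq> \<Union>{I\<in>V. J \<inter> I \<noteq> {}}"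
    and Ks: "\<forall>I\<in>V. K \<inter> I = {} \<or> (\<exists>k. K \<inter> I = {k})"
  shows "K \<in> JH V E"
proof -
  obtain e where e: "J \<in> Jsets e" "e \<in> LV V \<union> E" "e \<subseteq> V" "finite e" "e \<noteq> {}"
    using JH_E[OF J] by blast
  have eq: "e = {I\<in>V. J \<inter> I \<noteq> {}}" using Jsets_blocks e by auto
  define e' where "e' = {I\<in>V. K \<inter> I \<noteq> {}}"
  have e'e: "e' \<subseteq> e"
  proof
    fix I assume "I \<in> e'"
    then obtain x where x: "x \<in> K" "x \<in> I" "I \<in> V" unfolding e'_def by auto
    have "x \<in> \<Union>{I\<in>V. J \<inter> I \<noteq> {}}" by (rule subsetD[OF Ksub x(1)])
    then obtain I'' where "I'' \<in> V" "J \<inter> I'' \<noteq> {}" "x \<in> I''" by auto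
    then show "I \<in> e" using blk[of I I'' x] x eq by auto
  qed
  have KJ: "K \<in> Jsets e'"
    unfolding Jsets_def
  proof safe
    fix x assume "x \<in> K"
    then obtain I where "I \<in> V" "x \<in> I" using Ksub by auto
    then show "x \<in> \<Union>e'" using \<open>x \<in> K\<close> unfolding e'_def by auto
  next
    fix I assume "I \<in> e'"
    then show "card (K \<inter> I) = 1" using Ks unfolding e'_def by fastforce
  qed
  have fe': "finite e'" using e'e e(4) finite_subset by auto
  have ne': "e' \<noteq> {}"
  proof -
    obtain x where "x \<in> K" using Kne by auto
    then obtain I where "I \<in> V" "x \<in> I" using Ksub by auto
    then show ?thesis unfolding e'_def using \<open>x \<in> K\<close> by auto
  qed
  show ?thesis
  proof (cases "card e' = 1")
    case True
    then obtain I where I: "e' = {I}" by (auto simp: card_1_singleton_iff)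
    then have "I \<in> V" unfolding e'_def by auto
    then have "e' \<in> LV V" using I unfolding LV_def by auto
    then show ?thesis using KJ unfolding JH_def by auto
  next
    case False
    then have c2: "card e' > 1" using fe' ne' by (simp add: card_gt_0_iff nat_neq_iff)
    have "e \<notin> LV V"
    proof
      assume "e \<in> LV V"
      then obtain I where "e = {I}" unfolding LV_def by auto
      then have "e' \<subseteq> {I}" using e'e by simp
      then have "card e' \<le> card {I}" by (intro card_mono) auto
      then have "card e' \<le> 1" by simp
      then show False using c2 by simp
    qed
    then have "e \<in> E" using e(2) by auto
    then have "e' \<in> E" using down e'e c2 unfolding downward_closed_def by blast
    then show ?thesis using KJ unfolding JH_def by auto
  qed
qed

lemma singleton_JH: "I \<in> V \<Longrightarrow> i \<in> I \<Longrightarrow> {i} \<in> JH V E"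
proof -
  assume a: "I \<in> V" "i \<in> I"
  have "{I} \<in> LV V" using a unfolding LV_def by auto
  moreover have "{i} \<in> Jsets {I}" using a unfolding Jsets_def by auto
  ultimately show ?thesis unfolding JH_def by blast
qed

lemma singleton_JH': "i \<in> {1..n} \<Longrightarrow> {i} \<in> JH V E"
  by (metis UnionE partition singleton_JH)

lemma Kphi_F:
  assumes J: "J \<in> JH V E" and phi: "\<phi> \<in> PiE {I\<in>V. c I \<in> J} (opts c)"
  shows "Kphi c V J \<phi> = {} \<or> Kphi c V J \<phi> \<in> JH_le n V E (c ` V)"
proof -
  let ?K = "Kphi c V J \<phi>"
  let ?B = "{I\<in>V. c I \<in> J}"
  have phiI: "set_option (\<phi> I) \<subseteq> I - {c I}" if "I \<in> ?B" for I
  proof -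
    have "\<phi> I \<in> opts c I" using phi that by (auto simp: PiE_def Pi_def)
    then show ?thesis unfolding opts_def by auto
  qed
  have Kmem: "x \<in> ?K \<longleftrightarrow> (\<exists>I\<in>?B. x \<in> set_option (\<phi> I)) \<or> (x \<in> J \<and> x \<notin> c ` V)" for x
    unfolding Kphi_def by blast
  note JP = JH_props[OF J]
  have noc: "x \<notin> c ` V" if "x \<in> ?K" for x
  proof
    assume "x \<in> c ` V"
    then obtain I'' where I'': "I'' \<in> V" "x = c I''" by auto
    from that Kmem have "(\<exists>I\<in>?B. x \<in> set_option (\<phi> I)) \<or> (x \<in> J \<and> x \<notin> c ` V)" by blast
    then show False
    proof
      assume "\<exists>I\<in>?B. x \<in> set_option (\<phi> I)"
      then obtain I where I: "I \<in> ?B" "x \<in> set_option (\<phi> I)" by blast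
      then have "x \<in> I" "x \<noteq> c I" using phiI by auto
      moreover have "I'' = I" using blk[of I'' I x] I I'' cI[of I''] \<open>x \<in> I\<close> by auto
      ultimately show False using I'' by simp
    qed (use \<open>x \<in> c ` V\<close> in auto)
  qed
  have memblk: "\<exists>I\<in>V. x \<in> I \<and> J \<inter> I \<noteq> {}" if "x \<in> ?K" for x
  proof -
    from that Kmem have "(\<exists>I\<in>?B. x \<in> set_option (\<phi> I)) \<or> (x \<in> J \<and> x \<notin> c ` V)" by blast
    then show ?thesis
    proof
      assume "\<exists>I\<in>?B. x \<in> set_option (\<phi> I)"
      then obtain I where I: "I \<in> ?B" "x \<in> set_option (\<phi> I)" by blast
      then have "x \<in> I" using phiI by auto
      moreover have "c I \<in> J \<inter> I" using I cI by auto
      ultimately show ?thesis using I by blast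
    next
      assume a: "x \<in> J \<and> x \<notin> c ` V"
      then have "x \<in> \<Union>V" using JP(3) partition by auto
      then obtain I where "I \<in> V" "x \<in> I" by auto
      then show ?thesis using a by auto
    qed
  qed
  have Ksub: "?K \<subseteq> \<Union>{I\<in>V. J \<inter> I \<noteq> {}}" using memblk by blast
  have K1n: "?K \<subseteq> {1..n}"
  proof
    fix x assume "x \<in> ?K"
    then obtain I where "I \<in> V" "x \<in> I" using memblk by blast
    then show "x \<in> {1..n}" using partition by auto
  qed
  have Ks: "\<forall>I'\<in>V. ?K \<inter> I' = {} \<or> (\<exists>k. ?K \<inter> I' = {k})"
  proof
    fix I' assume I': "I' \<in> V"
    have JI': "J \<inter> I' = {} \<or> (\<exists>j. J \<inter> I' = {j})" using JP(4) I' by auto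
    show "?K \<inter> I' = {} \<or> (\<exists>k. ?K \<inter> I' = {k})"
    proof (cases "I' \<in> ?B")
      case True
      have "?K \<inter> I' = set_option (\<phi> I')"
      proof
        show "set_option (\<phi> I') \<subseteq> ?K \<inter> I'" using phiI[OF True] True Kmem by blast
        show "?K \<inter> I' \<subseteq> set_option (\<phi> I')"
        proof
          fix x assume x: "x \<in> ?K \<inter> I'"
          then have "(\<exists>I\<in>?B. x \<in> set_option (\<phi> I)) \<or> (x \<in> J \<and> x \<notin> c ` V)" using Kmem by blast
          then show "x \<in> set_option (\<phi> I')"
          proof
            assume "\<exists>I\<in>?B. x \<in> set_option (\<phi> I)"
            then obtain I where I: "I \<in> ?B" "x \<in> set_option (\<phi> I)" by blast
            then have "x \<in> I" using phiI by auto
            then have "I = I'" using blk[of I I' x] I I' x by auto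
            then show ?thesis using I by simp
          next
            assume a: "x \<in> J \<and> x \<notin> c ` V"
            have "c I' \<in> J \<inter> I'" using True cI[OF I'] by auto
            moreover have "x \<in> J \<inter> I'" using a x by auto
            ultimately have "x = c I'" using JI' by (metis empty_iff singletonD)
            then show ?thesis using a I' by auto
          qed
        qed
      qed
      then show ?thesis by (cases "\<phi> I'") auto
    next
      case False
      have "?K \<inter> I' \<subseteq> J \<inter> I'"
      proof
        fix x assume x: "x \<in> ?K \<inter> I'"
        then have "(\<exists>I\<in>?B. x \<in> set_option (\<phi> I)) \<or> (x \<in> J \<and> x \<notin> c ` V)" using Kmem by blast
        then show "x \<in> J \<inter> I'"
        proof
          assume "\<exists>I\<in>?B. x \<in> set_option (\<phi> I)"
          then obtain I where I: "I \<in> ?B" "x \<in> set_option (\<phi> I)" by blast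
          then have "x \<in> I" using phiI by auto
          then have "I = I'" using blk[of I I' x] I I' x by auto
          then show ?thesis using I False by simp
        qed (use x in auto)
      qed
      then show ?thesis using JI' by (metis subset_empty subset_singleton_iff)
    qed
  qed
  show ?thesis
  proof (cases "?K = {}")
    case False
    have "?K \<in> JH V E" by (rule JH_intro[OF J False Ksub Ks])
    then show ?thesis unfolding JH_le_def using K1n noc by blast
  qed simp
qed

definition Tset :: "(nat set \<Rightarrow> real) set" where
  "Tset = {w. (\<forall>J. J \<notin> JH V E \<longrightarrow> w J = 0) \<and>
        (\<forall>J\<in>JH V E - JH_le n V E (c ` V).
           w J = linearize w
             ((\<Prod>I\<in>{I\<in>V. c I \<in> J}. 1 - (\<Sum>i\<in>I - {c I}. Var i)) *
              (\<Prod>i\<in>J - c ` V. Var i)))}"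

lemma lin_J:
  assumes "J \<in> JH V E"
  shows "linearize w ((\<Prod>I\<in>{I\<in>V. c I \<in> J}. 1 - (\<Sum>i\<in>I - {c I}. Var i)) * (\<Prod>i\<in>J - c ` V. Var i))
    = (\<Sum>\<phi>\<in>PiE {I\<in>V. c I \<in> J} (opts c). (\<Prod>I\<in>{I\<in>V. c I \<in> J}. sg (\<phi> I)) * wt w (Kphi c V J \<phi>))"
  using lin_pJ[OF finV _ JH_props(1)[OF assms]] finI by blast

lemma JH_le_JH: "JH_le n V E D \<subseteq> JH V E"
  unfolding JH_le_def by auto

lemma T_det:
  assumes w1: "w1 \<in> Tset" and w2: "w2 \<in> Tset" and eq: "\<forall>K\<in>JH_le n V E (c ` V). w1 K = w2 K"
  shows "w1 = w2"
proof
  fix J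
  show "w1 J = w2 J"
  proof (cases "J \<in> JH V E")
    case False then show ?thesis using w1 w2 unfolding Tset_def by auto
  next
    case True
    show ?thesis
    proof (cases "J \<in> JH_le n V E (c ` V)")
      case True then show ?thesis using eq by auto
    next
      case False
      have "w1 J = (\<Sum>\<phi>\<in>PiE {I\<in>V. c I \<in> J} (opts c). (\<Prod>I\<in>{I\<in>V. c I \<in> J}. sg (\<phi> I)) * wt w1 (Kphi c V J \<phi>))"
        using w1 True False lin_J[OF True, of w1] unfolding Tset_def by auto
      also have "\<dots> = (\<Sum>\<phi>\<in>PiE {I\<in>V. c I \<in> J} (opts c). (\<Prod>I\<in>{I\<in>V. c I \<in> J}. sg (\<phi> I)) * wt w2 (Kphi c V J \<phi>))"
      proof (rule sum.cong[OF refl])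
        fix \<phi> assume "\<phi> \<in> PiE {I\<in>V. c I \<in> J} (opts c)"
        then have "Kphi c V J \<phi> = {} \<or> Kphi c V J \<phi> \<in> JH_le n V E (c ` V)" using Kphi_F[OF True] by blast
        then have "wt w1 (Kphi c V J \<phi>) = wt w2 (Kphi c V J \<phi>)" using eq unfolding wt_def by auto
        then show "(\<Prod>I\<in>{I\<in>V. c I \<in> J}. sg (\<phi> I)) * wt w1 (Kphi c V J \<phi>) = (\<Prod>I\<in>{I\<in>V. c I \<in> J}. sg (\<phi> I)) * wt w2 (Kphi c V J \<phi>)"
          by simp
      qed
      also have "\<dots> = w2 J"
        using w2 True False lin_J[OF True, of w2] unfolding Tset_def by auto
      finally show ?thesis .
    qed
  qed
qed

lemma lin_affine:
  assumes "u + v = 1"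
  shows "linearize (\<lambda>J. u * x J + v * y J) p = u * linearize x p + v * linearize y p"
proof -
  have "linearize (\<lambda>J. u * x J + v * y J) p =
    (\<Sum>m\<in>Poly_Mapping.keys p. u * (Poly_Mapping.lookup p m * (if m = 0 then 1 else x (Poly_Mapping.keys m)))
       + v * (Poly_Mapping.lookup p m * (if m = 0 then 1 else y (Poly_Mapping.keys m))))"
    unfolding linearize_def
  proof (rule sum.cong[OF refl])
    fix m
    show "Poly_Mapping.lookup p m * (if m = 0 then 1 else u * x (Poly_Mapping.keys m) + v * y (Poly_Mapping.keys m)) =
      u * (Poly_Mapping.lookup p m * (if m = 0 then 1 else x (Poly_Mapping.keys m))) +
      v * (Poly_Mapping.lookup p m * (if m = 0 then 1 else y (Poly_Mapping.keys m)))"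
    proof (cases "m = 0")
      case True
      have "Poly_Mapping.lookup p m = (u + v) * Poly_Mapping.lookup p m" using assms by simp
      then show ?thesis using True by (simp add: algebra_simps)
    qed (simp add: algebra_simps)
  qed
  also have "\<dots> = u * linearize x p + v * linearize y p"
    unfolding linearize_def by (simp add: sum.distrib sum_distrib_left)
  finally show ?thesis .
qed

lemma T_affine: "affine_fun Tset"
  unfolding affine_fun_def
proof (intro ballI allI impI)
  fix x y u v assume x: "x \<in> Tset" and y: "y \<in> Tset" and uv: "(u::real) + v = 1"
  show "(\<lambda>J. u * x J + v * y J) \<in> Tset"
    using x y unfolding Tset_def by (auto simp: lin_affine[OF uv])
qed

lemma prod_binary_ind:
  assumes "finite A" "\<forall>i\<in>A. x i = ind (x i = 1)"
  shows "(\<Prod>i\<in>A. x i) = ind (\<forall>i\<in>A. x i = 1)"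
proof -
  have "(\<Prod>i\<in>A. x i) = (\<Prod>i\<in>A. ind (x i = 1))" using assms(2) by (intro prod.cong) auto
  then show ?thesis using prod_ind[OF assms(1)] by simp
qed

lemma SH_T: "SH V E \<subseteq> Tset"
proof
  fix w assume w: "w \<in> SH V E"
  have w0: "\<forall>J. J \<notin> JH V E \<longrightarrow> w J = 0" and wb: "\<forall>J\<in>JH V E. w J \<in> {0, 1}"
    and ws: "\<forall>I\<in>V. (\<Sum>i\<in>I. w {i}) = 1" and wp: "\<forall>J\<in>JH V E. card J > 1 \<longrightarrow> w J = (\<Prod>i\<in>J. w {i})"
    using w unfolding SH_def by auto
  define x where "x i = w {i}" for i
  have xb: "x i = ind (x i = 1)" if "i \<in> {1..n}" for i
    using wb singleton_JH'[OF that] unfolding x_def ind_def by auto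
  have wtK: "wt w K = ind (\<forall>i\<in>K. x i = 1)" if K: "K = {} \<or> K \<in> JH V E" for K
  proof (cases "K = {}")
    case True then show ?thesis by (simp add: wt_def ind_def)
  next
    case False
    then have KJ: "K \<in> JH V E" using K by auto
    note P = JH_props[OF KJ]
    show ?thesis
    proof (cases "card K = 1")
      case True
      then obtain k where k: "K = {k}" by (auto simp: card_1_singleton_iff)
      then have "k \<in> {1..n}" using P(3) by auto
      then show ?thesis using xb[of k] k unfolding wt_def x_def by simp
    next
      case c: False
      then have "card K > 1" using P(1,2) by (simp add: card_gt_0_iff nat_neq_iff)
      then have "w K = (\<Prod>i\<in>K. x i)" using wp KJ unfolding x_def by auto
      also have "\<dots> = ind (\<forall>i\<in>K. x i = 1)" using P(1,3) xb by (intro prod_binary_ind) auto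
      finally show ?thesis using False unfolding wt_def by simp
    qed
  qed
  have "\<forall>J\<in>JH V E - JH_le n V E (c ` V).
           w J = linearize w
             ((\<Prod>I\<in>{I\<in>V. c I \<in> J}. 1 - (\<Sum>i\<in>I - {c I}. Var i)) *
              (\<Prod>i\<in>J - c ` V. Var i))"
  proof
    fix J assume J: "J \<in> JH V E - JH_le n V E (c ` V)"
    then have JJ: "J \<in> JH V E" by auto
    note P = JH_props[OF JJ]
    let ?B = "{I\<in>V. c I \<in> J}"
    let ?R = "J - c ` V"
    have fB: "finite ?B" using finV by simp
    define f where "f (I::nat set) ot = sg ot * ind (\<forall>i\<in>set_option ot. x i = 1)" for I ot
    have trm: "(\<Prod>I\<in>?B. sg (\<phi> I)) * wt w (Kphi c V J \<phi>) = (\<Prod>I\<in>?B. f I (\<phi> I)) * ind (\<forall>i\<in>?R. x i = 1)"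
      if phi: "\<phi> \<in> PiE ?B (opts c)" for \<phi>
    proof -
      have "Kphi c V J \<phi> = {} \<or> Kphi c V J \<phi> \<in> JH V E" using Kphi_F[OF JJ phi] JH_le_JH by blast
      then have "wt w (Kphi c V J \<phi>) = ind (\<forall>i\<in>Kphi c V J \<phi>. x i = 1)" by (rule wtK)
      also have "\<dots> = ind ((\<forall>I\<in>?B. \<forall>i\<in>set_option (\<phi> I). x i = 1) \<and> (\<forall>i\<in>?R. x i = 1))"
        unfolding Kphi_def by (rule arg_cong[where f = ind]) blast
      also have "\<dots> = (\<Prod>I\<in>?B. ind (\<forall>i\<in>set_option (\<phi> I). x i = 1)) * ind (\<forall>i\<in>?R. x i = 1)"
        using prod_ind[OF fB, of "\<lambda>I. \<forall>i\<in>set_option (\<phi> I). x i = 1"] by (simp add: ind_def)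
      finally show ?thesis unfolding f_def by (simp add: prod.distrib)
    qed
    have inner: "(\<Sum>ot\<in>opts c I. f I ot) = ind (x (c I) = 1)" if I: "I \<in> ?B" for I
    proof -
      have IV: "I \<in> V" using I by auto
      have fI: "finite I" using finI IV by auto
      have I1n: "I \<subseteq> {1..n}" using IV partition by auto
      have "(\<Sum>ot\<in>opts c I. f I ot) = f I None + (\<Sum>ot\<in>Some ` (I - {c I}). f I ot)"
        unfolding opts_def using fI by (subst sum.insert) auto
      also have "(\<Sum>ot\<in>Some ` (I - {c I}). f I ot) = (\<Sum>i\<in>I - {c I}. f I (Some i))"
        by (subst sum.reindex) auto
      also have "\<dots> = (\<Sum>i\<in>I - {c I}. - x i)"
        using xb I1n unfolding f_def sg_def by (intro sum.cong) auto
      finally have "(\<Sum>ot\<in>opts c I. f I ot) = 1 - (\<Sum>i\<in>I - {c I}. x i)"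
        unfolding f_def sg_def by (simp add: ind_def sum_negf)
      also have "(\<Sum>i\<in>I. x i) = x (c I) + (\<Sum>i\<in>I - {c I}. x i)"
        using fI cI[OF IV] by (rule sum.remove)
      then have "1 - (\<Sum>i\<in>I - {c I}. x i) = x (c I)" using ws IV unfolding x_def by auto
      also have "\<dots> = ind (x (c I) = 1)" using xb I1n cI[OF IV] by auto
      finally show ?thesis .
    qed
    have "linearize w ((\<Prod>I\<in>?B. 1 - (\<Sum>i\<in>I - {c I}. Var i)) * (\<Prod>i\<in>?R. Var i))
       = (\<Sum>\<phi>\<in>PiE ?B (opts c). (\<Prod>I\<in>?B. f I (\<phi> I)) * ind (\<forall>i\<in>?R. x i = 1))"
      unfolding lin_J[OF JJ] using trm by (rule sum.cong[OF refl])
    also have "\<dots> = (\<Sum>\<phi>\<in>PiE ?B (opts c). \<Prod>I\<in>?B. f I (\<phi> I)) * ind (\<forall>i\<in>?R. x i = 1)"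
      by (simp add: sum_distrib_right)
    also have "(\<Sum>\<phi>\<in>PiE ?B (opts c). \<Prod>I\<in>?B. f I (\<phi> I)) = (\<Prod>I\<in>?B. \<Sum>ot\<in>opts c I. f I ot)"
      using fB finI by (intro prod_sum_PiE[symmetric]) (auto intro: finite_opts)
    also have "\<dots> = (\<Prod>I\<in>?B. ind (x (c I) = 1))"
      using inner by (intro prod.cong) auto
    also have "\<dots> = ind (\<forall>I\<in>?B. x (c I) = 1)" by (rule prod_ind[OF fB])
    finally have "linearize w ((\<Prod>I\<in>?B. 1 - (\<Sum>i\<in>I - {c I}. Var i)) * (\<Prod>i\<in>?R. Var i))
       = ind ((\<forall>I\<in>?B. x (c I) = 1) \<and> (\<forall>i\<in>?R. x i = 1))" by (simp add: ind_def)
    also have "(\<forall>I\<in>?B. x (c I) = 1) \<and> (\<forall>i\<in>?R. x i = 1) \<longleftrightarrow> (\<forall>i\<in>J. x i = 1)"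
      by blast
    also have "ind (\<forall>i\<in>J. x i = 1) = w J"
      using wtK[of J] JJ P(2) unfolding wt_def by simp
    finally show "w J = linearize w ((\<Prod>I\<in>?B. 1 - (\<Sum>i\<in>I - {c I}. Var i)) * (\<Prod>i\<in>?R. Var i))" by simp
  qed
  then show "w \<in> Tset" using w0 unfolding Tset_def by blast
qed

definition Xs :: "nat set \<Rightarrow> nat set" where
  "Xs K = K \<union> {c I | I. I \<in> V \<and> K \<inter> I = {}}"

definition chi :: "nat set \<Rightarrow> nat set \<Rightarrow> real" where
  "chi K = (\<lambda>J. if J \<in> JH V E then ind (J \<subseteq> Xs K) else 0)"

lemma chi_F:
  assumes K': "K' \<in> JH_le n V E (c ` V)"
  shows "chi K K' = ind (K' \<subseteq> K)"
proof -
  have "K' \<in> JH V E" "K' \<subseteq> {1..n} - c ` V" using K' unfolding JH_le_def by auto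
  moreover have "K' \<subseteq> Xs K \<longleftrightarrow> K' \<subseteq> K" using calculation(2) unfolding Xs_def by blast
  ultimately show ?thesis unfolding chi_def by simp
qed

lemma chi_SH:
  assumes K: "K = {} \<or> K \<in> JH_le n V E (c ` V)"
  shows "chi K \<in> SH V E"
proof -
  have Kc: "K \<inter> c ` V = {}" using K unfolding JH_le_def by auto
  have KI: "\<forall>I\<in>V. K \<inter> I = {} \<or> (\<exists>k. K \<inter> I = {k})"
    using K JH_props(4) JH_le_JH by blast
  have blockone: "\<exists>t\<in>I. \<forall>i\<in>I. (i \<in> Xs K \<longleftrightarrow> i = t)" if I: "I \<in> V" for I
  proof (cases "K \<inter> I = {}")
    case True
    have "\<forall>i\<in>I. (i \<in> Xs K \<longleftrightarrow> i = c I)"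
    proof
      fix i assume i: "i \<in> I"
      show "i \<in> Xs K \<longleftrightarrow> i = c I"
      proof
        assume "i \<in> Xs K"
        then have "i \<in> K \<or> (\<exists>I'. I' \<in> V \<and> K \<inter> I' = {} \<and> i = c I')" unfolding Xs_def by blast
        then show "i = c I"
        proof
          assume "i \<in> K" then show ?thesis using True i by auto
        next
          assume "\<exists>I'. I' \<in> V \<and> K \<inter> I' = {} \<and> i = c I'"
          then obtain I' where "I' \<in> V" "i = c I'" by blast
          then show ?thesis using blk[of I' I i] cI[of I'] I i by auto
        qed
      next
        assume "i = c I" then show "i \<in> Xs K" using True I unfolding Xs_def by blast
      qed
    qed
    then show ?thesis using cI[OF I] by blast
  next
    case False
    then obtain k where k: "K \<inter> I = {k}" using KI I by blast
    have "\<forall>i\<in>I. (i \<in> Xs K \<longleftrightarrow> i = k)"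
    proof
      fix i assume i: "i \<in> I"
      show "i \<in> Xs K \<longleftrightarrow> i = k"
      proof
        assume "i \<in> Xs K"
        then have "i \<in> K \<or> (\<exists>I'. I' \<in> V \<and> K \<inter> I' = {} \<and> i = c I')" unfolding Xs_def by blast
        then show "i = k"
        proof
          assume "i \<in> K" then show ?thesis using k i by auto
        next
          assume "\<exists>I'. I' \<in> V \<and> K \<inter> I' = {} \<and> i = c I'"
          then obtain I' where "I' \<in> V" "K \<inter> I' = {}" "i = c I'" by blast
          then show ?thesis using blk[of I' I i] cI[of I'] I i False by auto
        qed
      next
        assume "i = k" then show "i \<in> Xs K" using k unfolding Xs_def by blast
      qed
    qed
    then show ?thesis using k by blast
  qed
  have chi1: "chi K {i} = ind (i \<in> Xs K)" if "i \<in> {1..n}" for i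
    using singleton_JH'[OF that] unfolding chi_def by simp
  show ?thesis
    unfolding SH_def
  proof (intro CollectI conjI ballI allI impI)
    fix J assume "J \<notin> JH V E" then show "chi K J = 0" unfolding chi_def by simp
  next
    fix J assume "J \<in> JH V E" then show "chi K J \<in> {0, 1}" unfolding chi_def ind_def by simp
  next
    fix I assume I: "I \<in> V"
    then obtain t where t: "t \<in> I" "\<forall>i\<in>I. (i \<in> Xs K \<longleftrightarrow> i = t)" using blockone by blast
    have I1n: "I \<subseteq> {1..n}" using I partition by auto
    have "(\<Sum>i\<in>I. chi K {i}) = (\<Sum>i\<in>I. if i = t then 1 else 0)"
      using chi1 I1n t(2) by (intro sum.cong) (auto simp: ind_def)
    also have "\<dots> = 1" using finI[OF I] t(1) by simp
    finally show "(\<Sum>i\<in>I. chi K {i}) = 1" .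
  next
    fix J assume J: "J \<in> JH V E" and cJ: "card J > 1"
    note P = JH_props[OF J]
    have "(\<Prod>i\<in>J. chi K {i}) = (\<Prod>i\<in>J. ind (i \<in> Xs K))"
      using chi1 P(3) by (intro prod.cong) auto
    also have "\<dots> = ind (\<forall>i\<in>J. i \<in> Xs K)" by (rule prod_ind[OF P(1)])
    finally show "chi K J = (\<Prod>i\<in>J. chi K {i})" using J unfolding chi_def by (simp add: subset_eq)
  qed
qed

lemma finite_F: "finite (JH_le n V E (c ` V))"
proof -
  have "JH_le n V E (c ` V) \<subseteq> Pow {1..n}" using JH_props(3) unfolding JH_le_def by auto
  then show ?thesis by (rule finite_subset) simp
qed

lemma main: "affine_fun hull (MC V E) = Tset"
proof
  have "MC V E \<subseteq> Tset" unfolding MC_def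
    by (rule hull_minimal[where S=convex_fun, OF SH_T affine_convex_fun[OF T_affine]])
  then show "affine_fun hull (MC V E) \<subseteq> Tset" by (rule hull_minimal[where S=affine_fun, OF _ T_affine])
next
  let ?A = "affine_fun hull (MC V E)"
  let ?F = "JH_le n V E (c ` V)"
  have Aaff: "affine_fun ?A" by (rule affine_fun_hull)
  have SHA: "SH V E \<subseteq> ?A" unfolding MC_def by (meson hull_subset subset_trans)
  have chiA: "chi K \<in> ?A" and chiT: "chi K \<in> Tset" if "K = {} \<or> K \<in> ?F" for K
    using chi_SH[OF that] SHA SH_T by auto
  have chi0: "chi {} K = 0" if "K \<in> ?F" for K
  proof -
    have "K \<noteq> {}" using JH_props(2)[of K] that JH_le_JH by blast
    then show ?thesis using chi_F[OF that, of "{}"] unfolding ind_def by simp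
  qed
  have claim: "\<forall>w\<in>Tset. (\<forall>K\<in>?F. w K \<noteq> 0 \<longrightarrow> K \<in> G) \<longrightarrow> w \<in> ?A"
    if "finite G" "G \<subseteq> ?F" "\<forall>K\<in>G. \<forall>K'\<in>?F. K' \<subseteq> K \<longrightarrow> K' \<in> G" for G
    using that
  proof (induction G rule: finite_psubset_induct)
    case (psubset G)
    show ?case
    proof (intro ballI impI)
      fix w assume w: "w \<in> Tset" and supp: "\<forall>K\<in>?F. w K \<noteq> 0 \<longrightarrow> K \<in> G"
      show "w \<in> ?A"
      proof (cases "G = {}")
        case True
        have "w = chi {}"
          by (rule T_det[OF w chiT]) (use supp True chi0 in auto)
        then show ?thesis using chiA by auto
      next
        case False
        obtain K where K: "K \<in> G" and Kmax: "\<forall>b\<in>G. K \<le> b \<longrightarrow> K = b"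
          using finite_has_maximal[OF psubset.hyps(1) False] by blast
        have KF: "K \<in> ?F" using K psubset.prems by auto
        define w' where "w' = (\<lambda>J. w J + (- w K) * chi K J - (- w K) * chi {} J)"
        have w'T: "w' \<in> Tset" unfolding w'_def
          by (rule affine_fun_3[OF T_affine w chiT chiT]) (use KF in auto)
        have sub: "G - {K} \<subset> G" using K by auto
        have IH: "\<forall>w\<in>Tset. (\<forall>K'\<in>?F. w K' \<noteq> 0 \<longrightarrow> K' \<in> G - {K}) \<longrightarrow> w \<in> ?A"
        proof (rule psubset.IH[OF sub])
          show "G - {K} \<subseteq> ?F" using psubset.prems by auto
          show "\<forall>K1\<in>G - {K}. \<forall>K'\<in>?F. K' \<subseteq> K1 \<longrightarrow> K' \<in> G - {K}"
          proof (intro ballI impI)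
            fix K1 K' assume K1: "K1 \<in> G - {K}" and K': "K' \<in> ?F" "K' \<subseteq> K1"
            have "K' \<in> G" using psubset.prems K1 K' by auto
            moreover have "K' \<noteq> K" using Kmax K1 K' by auto
            ultimately show "K' \<in> G - {K}" by simp
          qed
        qed
        have "\<forall>K'\<in>?F. w' K' \<noteq> 0 \<longrightarrow> K' \<in> G - {K}"
        proof (intro ballI impI)
          fix K' assume K': "K' \<in> ?F" and nz: "w' K' \<noteq> 0"
          have w'K': "w' K' = w K' - w K * ind (K' \<subseteq> K)"
            unfolding w'_def using chi_F[OF K'] chi0[OF K'] by simp
          show "K' \<in> G - {K}"
          proof (cases "K' \<subseteq> K")
            case True
            have "K' \<in> G" using psubset.prems K K' True by auto
            moreover have "K' \<noteq> K" using nz w'K' unfolding ind_def by auto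
            ultimately show ?thesis by simp
          next
            case False
            then have "w K' \<noteq> 0" using nz w'K' unfolding ind_def by auto
            then show ?thesis using supp K' False by auto
          qed
        qed
        then have w'A: "w' \<in> ?A" using IH w'T by blast
        have "(\<lambda>J. w' J + w K * chi K J - w K * chi {} J) \<in> ?A"
          by (rule affine_fun_3[OF Aaff w'A chiA chiA]) (use KF in auto)
        moreover have "(\<lambda>J. w' J + w K * chi K J - w K * chi {} J) = w"
          unfolding w'_def by (rule ext) (simp add: algebra_simps)
        ultimately show ?thesis by simp
      qed
    qed
  qed
  show "Tset \<subseteq> ?A"
  proof
    fix w assume "w \<in> Tset"
    then show "w \<in> ?A" using claim[OF finite_F order.refl] by auto
  qed
qed

end

theorem theorem3p6:
  fixes n :: nat and V :: "nat set set" and E :: "nat set set set" and c :: "nat set \<Rightarrow> nat"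
  assumes partition: "\<Union>V = {1..n}"
    and disj: "\<forall>I\<in>V. \<forall>I'\<in>V. I \<noteq> I' \<longrightarrow> I \<inter> I' = {}"
    and card_blocks: "\<forall>I\<in>V. finite I \<and> card I \<ge> 2"
    and edges: "\<forall>e\<in>E. e \<subseteq> V \<and> finite e \<and> card e \<ge> 2"
    and down: "downward_closed E"
    and choice: "\<forall>I\<in>V. c I \<in> I"
  shows "affine_fun hull (MC V E) =
    {w. (\<forall>J. J \<notin> JH V E \<longrightarrow> w J = 0) \<and>
        (\<forall>J\<in>JH V E - JH_le n V E (c ` V).
           w J = linearize w
             ((\<Prod>I\<in>{I\<in>V. c I \<in> J}. 1 - (\<Sum>i\<in>I - {c I}. Var i)) *
              (\<Prod>i\<in>J - c ` V. Var i)))}"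
  proof -
  interpret hg n V E c
    using partition disj card_blocks edges down choice by unfold_locales
  show ?thesis using main unfolding Tset_def .
qed

end
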